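(* Let $\tilde{\mathcal D}$ be a finite set of examples, let $\mathrm{sim}:\tilde{\mathcal D}\times\tilde{\mathcal D}\to\mathbb{R}$, let $C:\tilde{\mathcal D}\to[0,\infty)$, let $\tau\ge 0$, and let $\sigma:[0,\infty)\to\mathbb{R}$ be non-decreasing and concave with $\sigma(0)=0$. For $\mathcal S\subseteq\tilde{\mathcal D}$ and $x_i\in\tilde{\mathcal D}$ define $$\hat C_{\mathcal N}(x_i;\mathcal S)=\sum_{x_j\in\mathcal S}\mathbb 1_{[\mathrm{sim}(x_i,x_j)\ge\tau]}\,\mathrm{sim}(x_i,x_j)\,C(x_j),\qquad OBJ(\mathcal S)=\sum_{x_i\in\tilde{\mathcal D}}\sigma\big(\hat C_{\mathcal N}(x_i;\mathcal S)\big).$$ Then $OBJ$ is submodular: for all $\mathcal S\subset\mathcal S'\subseteq\tilde{\mathcal D}$ and all $x\in\tilde{\mathcal D}\setminus\mathcal S'$, $$OBJ(\mathcal S\cup\{x\})-OBJ(\mathcal S)\ge OBJ(\mathcal S'\cup\{x\})-OBJ(\mathcal S').$$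
   Context: In the paper, $\mathrm{sim}$ is the cosine similarity between embeddings of augmentations of two examples, $C$ is a prediction confidence (e.g. maximum softmax probability), $\tau$ is a neighborhood threshold and $\sigma$ is a utility function (e.g. the positive part of $\tanh$). *)

theory Defs
  imports "HOL-Analysis.Analysis"
begin

definition C_hat_N :: "('a \<Rightarrow> 'a \<Rightarrow> real) \<Rightarrow> ('a \<Rightarrow> real) \<Rightarrow> real \<Rightarrow> 'a set \<Rightarrow> 'a \<Rightarrow> real" where
  "C_hat_N sim C \<tau> S xi =
     (\<Sum>xj\<in>S. (if sim xi xj \<ge> \<tau> then 1 else 0) * sim xi xj * C xj)"

definition OBJ :: "'a set \<Rightarrow> ('a \<Rightarrow> 'a \<Rightarrow> real) \<Rightarrow> ('a \<Rightarrow> real) \<Rightarrow> real \<Rightarrow> (real \<Rightarrow> real) \<Rightarrow> 'a set \<Rightarrow> real" where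
  "OBJ D sim C \<tau> \<sigma> S = (\<Sum>xi\<in>D. \<sigma> (C_hat_N sim C \<tau> S xi))"

end

theory Submission
  imports Defs
begin

lemma concave_incr:
  fixes f :: "real \<Rightarrow> real"
  assumes cv: "concave_on {0..} f" and a: "0 \<le> a" "a \<le> b" and d: "0 \<le> d"
  shows "f (b + d) - f b \<le> f (a + d) - f a"
proof (cases "d = 0")
  case True then show ?thesis by simp
next
  case False
  define L where "L = b + d - a"
  have L: "L > 0" using False a d unfolding L_def by linarith
  define t where "t = d / L"
  have t0: "t \<ge> 0" "t \<le> 1" using L d a unfolding t_def L_def by (auto simp: field_simps)
  have tL: "t * (b + d - a) = d" using L unfolding t_def L_def by simp
  have e1: "a + d = (1 - t) *\<^sub>R a + t *\<^sub>R (b + d)"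
    using tL by (simp add: algebra_simps)
  have e2: "b = (1 - (1 - t)) *\<^sub>R a + (1 - t) *\<^sub>R (b + d)"
    using tL by (simp add: algebra_simps)
  have i1: "f (a + d) \<ge> (1 - t) * f a + t * f (b + d)"
    using concave_onD[OF cv, of t a "b + d"] t0 a d e1 by simp
  have i2: "f b \<ge> (1 - (1 - t)) * f a + (1 - t) * f (b + d)"
    proof -
    have "b + d \<in> {0..}" "a \<in> {0..}" using a d by auto
    moreover have "1 - t \<ge> 0" "1 - t \<le> 1" using t0 by auto
    ultimately show ?thesis using concave_onD[OF cv, of "1 - t" a "b + d"] e2 by simp
  qed
  show ?thesis using i1 i2 by (simp add: algebra_simps)
qed

theorem lemma6:
  fixes D :: "'a set" and sim :: "'a \<Rightarrow> 'a \<Rightarrow> real" and C :: "'a \<Rightarrow> real"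
    and \<tau> :: real and \<sigma> :: "real \<Rightarrow> real" and S S' :: "'a set" and x :: 'a
  assumes "finite D"
    and "\<forall>y\<in>D. C y \<ge> 0"
    and "\<tau> \<ge> 0"
    and "mono_on {0..} \<sigma>"
    and "concave_on {0..} \<sigma>"
    and "\<sigma> 0 = 0"
    and "S \<subset> S'" and "S' \<subseteq> D"
    and "x \<in> D - S'"
  shows "OBJ D sim C \<tau> \<sigma> (S \<union> {x}) - OBJ D sim C \<tau> \<sigma> S
           \<ge> OBJ D sim C \<tau> \<sigma> (S' \<union> {x}) - OBJ D sim C \<tau> \<sigma> S'"
proof -
  define g where "g xi y = (if sim xi y \<ge> \<tau> then 1 else 0) * sim xi y * C y" for xi y
  have gnn: "g xi y \<ge> 0" if "y \<in> D" for xi y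
    using assms(2,3) that unfolding g_def by auto
  have fS: "finite S" "finite S'" using finite_subset[OF assms(8) assms(1)] finite_subset[OF psubset_imp_subset[OF assms(7)]] by auto
  have ch: "C_hat_N sim C \<tau> T xi = (\<Sum>y\<in>T. g xi y)" for T xi
    unfolding C_hat_N_def g_def by simp
  have ins: "C_hat_N sim C \<tau> (insert x T) xi = C_hat_N sim C \<tau> T xi + g xi x"
    if "finite T" "x \<notin> T" for T xi
    using that by (simp add: ch)
  have nnT: "C_hat_N sim C \<tau> T xi \<ge> 0" if "T \<subseteq> D" for T xi
    unfolding ch using gnn that by (meson subsetD sum_nonneg)
  have le: "C_hat_N sim C \<tau> S xi \<le> C_hat_N sim C \<tau> S' xi" for xi
    unfolding ch using gnn assms(7,8) fS by (intro sum_mono2) auto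
  have SD: "S \<subseteq> D" using assms(7,8) by auto
  have xD: "x \<in> D" using assms(9) by auto
  have "\<sigma> (C_hat_N sim C \<tau> S' xi + g xi x) - \<sigma> (C_hat_N sim C \<tau> S' xi)
        \<le> \<sigma> (C_hat_N sim C \<tau> S xi + g xi x) - \<sigma> (C_hat_N sim C \<tau> S xi)" for xi
    using concave_incr[OF assms(5) nnT[OF SD] le gnn[OF xD]] by blast
  then have "(\<Sum>xi\<in>D. \<sigma> (C_hat_N sim C \<tau> S' xi + g xi x) - \<sigma> (C_hat_N sim C \<tau> S' xi))
        \<le> (\<Sum>xi\<in>D. \<sigma> (C_hat_N sim C \<tau> S xi + g xi x) - \<sigma> (C_hat_N sim C \<tau> S xi))"
    by (rule sum_mono)
  moreover have "x \<notin> S" "x \<notin> S'" using assms(7,9) by auto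
  ultimately show ?thesis
    unfolding OBJ_def using fS by (simp add: ins sum_subtractf)
qed

end
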